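(* Let $A\in\mathbb{R}^{n\times n}$ be an invertible M-matrix, partitioned as $A=\begin{bmatrix} A_{11} & A_{12}\\ A_{21} & A_{22}\end{bmatrix}$ with square diagonal blocks $A_{11}\in\mathbb{R}^{k\times k}$, $A_{22}\in\mathbb{R}^{(n-k)\times(n-k)}$. Let $M_{11},N_{11}\in\mathbb{R}^{k\times k}$, $M_{22},N_{22}\in\mathbb{R}^{(n-k)\times(n-k)}$, $M_{21},N_{21}\in\mathbb{R}^{(n-k)\times k}$, and suppose that both pairs \[ M' = \begin{bmatrix} M_{11} & 0\\ M_{21} & M_{22}\end{bmatrix},\quad N' = \begin{bmatrix} N_{11} & -A_{12}\\ N_{21} & N_{22}\end{bmatrix} \qquad\text{and}\qquad \hat{M} = \begin{bmatrix} M_{11} & A_{12}\\ 0 & M_{22}\end{bmatrix},\quad \hat{N} = \begin{bmatrix} N_{11} & 0\\ -A_{21} & N_{22}\end{bmatrix} \] are regular splittings of $A$. Then $\rho(\hat{M}^{-1}\hat{N}) \leq \rho((M')^{-1}N')$.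
   Context: A regular splitting of $A$ is a pair $(M,N)$ with $M$ an invertible M-matrix, $N\geq 0$ entrywise, and $A=M-N$. $\rho(\cdot)$ denotes the spectral radius. *)

theory Defs
  imports "Jordan_Normal_Form.Spectral_Radius" "Jordan_Normal_Form.Gauss_Jordan_Elimination"
begin

definition nonneg_mat :: "real mat \<Rightarrow> bool" where
  "nonneg_mat B \<longleftrightarrow> (\<forall>i < dim_row B. \<forall>j < dim_col B. B $$ (i, j) \<ge> 0)"

definition rho :: "real mat \<Rightarrow> real" where
  "rho A = spectral_radius (map_mat complex_of_real A)"

definition M_matrix :: "nat \<Rightarrow> real mat \<Rightarrow> bool" where
  "M_matrix n A \<longleftrightarrow> A \<in> carrier_mat n n \<and>
     (\<exists>s B. B \<in> carrier_mat n n \<and> nonneg_mat B \<and> s \<ge> rho B \<and> A = s \<cdot>\<^sub>m 1\<^sub>m n - B)"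

definition inv_M_matrix :: "nat \<Rightarrow> real mat \<Rightarrow> bool" where
  "inv_M_matrix n A \<longleftrightarrow> M_matrix n A \<and> invertible_mat A"

definition regular_splitting :: "nat \<Rightarrow> real mat \<Rightarrow> real mat \<Rightarrow> real mat \<Rightarrow> bool" where
  "regular_splitting n A M N \<longleftrightarrow> inv_M_matrix n M \<and> N \<in> carrier_mat n n \<and> nonneg_mat N
     \<and> A = M - N"

text \<open>Matrix inverse (meaningful for invertible square matrices).\<close>
definition minv :: "real mat \<Rightarrow> real mat" where
  "minv A = the (mat_inverse A)"

end

theory Submission imports Defs begin

lemma mult_mat_vec_sum:
  assumes "A \<in> carrier_mat n m" "v \<in> carrier_vec m" "i < n"
  shows "(A *\<^sub>v v) $ i = (\<Sum>j<m. A $$ (i,j) * v $ j)"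
  using assms by (auto simp: scalar_prod_def lessThan_atLeast0 intro!: sum.cong)

lemma eig_bound_gen:
  fixes T :: "real mat" and x :: "real vec"
  assumes T: "T \<in> carrier_mat n n" and nn: "nonneg_mat T"
  and x: "x \<in> carrier_vec n" and pos: "\<forall>i<n. x$i > 0"
  and ev: "eigenvalue (map_mat complex_of_real T) lam"
  shows "\<exists>i<n. norm lam * x$i \<le> (T *\<^sub>v x) $ i"
proof -
  let ?Tc = "map_mat complex_of_real T"
  have Tc: "?Tc \<in> carrier_mat n n" using T by auto
  from ev obtain v where v: "v \<in> carrier_vec n" "v \<noteq> 0\<^sub>v n" "?Tc *\<^sub>v v = lam \<cdot>\<^sub>v v"
    unfolding eigenvalue_def eigenvector_def using T by auto
  define f where "f i = norm (v$i) / x$i" for i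
  have "\<exists>i<n. v$i \<noteq> 0"
  proof (rule ccontr)
    assume "\<not> ?thesis"
    hence "v = 0\<^sub>v n" using v(1) by (intro eq_vecI) auto
    with v(2) show False by simp
  qed
  then obtain i1 where i1: "i1 < n" "v$i1 \<noteq> 0" by auto
  define c where "c = Max (f ` {..<n})"
  have fin: "finite (f ` {..<n})" "f ` {..<n} \<noteq> {}" using i1 by auto
  have "c \<in> f ` {..<n}" unfolding c_def using fin by (rule Max_in)
  then obtain i0 where i0: "i0 < n" "f i0 = c" by auto
  have fle: "f j \<le> c" if "j < n" for j unfolding c_def using fin that by auto
  have "f i1 > 0" unfolding f_def using i1 pos by auto
  hence cpos: "c > 0" using fle[OF i1(1)] by linarith
  have vle: "norm (v$j) \<le> c * x$j" if "j < n" for j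
    using fle[OF that] pos that unfolding f_def by (auto simp: field_simps)
  have vi0: "norm (v$i0) = c * x$i0" using i0 pos unfolding f_def by (auto simp: field_simps)
  have "lam * v$i0 = (?Tc *\<^sub>v v) $ i0" using v(3) v(1) i0 by auto
  also have "\<dots> = (\<Sum>j<n. complex_of_real (T $$ (i0,j)) * v $ j)"
    using mult_mat_vec_sum[OF Tc v(1) i0(1)] T i0 by auto
  finally have eq: "lam * v$i0 = (\<Sum>j<n. complex_of_real (T $$ (i0,j)) * v $ j)" .
  have "norm lam * (c * x$i0) = norm (lam * v$i0)" using vi0 by (simp add: norm_mult)
  also have "\<dots> \<le> (\<Sum>j<n. norm (complex_of_real (T $$ (i0,j)) * v $ j))"
    unfolding eq by (rule norm_sum)
  also have "\<dots> \<le> (\<Sum>j<n. T $$ (i0,j) * (c * x$j))"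
  proof (rule sum_mono)
    fix j assume j: "j \<in> {..<n}"
    have t0: "T $$ (i0,j) \<ge> 0" using nn T i0 j unfolding nonneg_mat_def by auto
    have "norm (complex_of_real (T $$ (i0,j)) * v $ j) = T $$ (i0,j) * norm (v$j)"
      using t0 by (simp add: norm_mult)
    also have "\<dots> \<le> T $$ (i0,j) * (c * x$j)" using vle j t0 by (auto intro: mult_left_mono)
    finally show "norm (complex_of_real (T $$ (i0,j)) * v $ j) \<le> T $$ (i0,j) * (c * x$j)" .
  qed
  also have "\<dots> = c * (T *\<^sub>v x) $ i0"
    using mult_mat_vec_sum[OF T x i0(1)] by (simp add: sum_distrib_left algebra_simps)
  finally have "c * (norm lam * x$i0) \<le> c * (T *\<^sub>v x) $ i0" by (simp add: algebra_simps)
  hence "norm lam * x$i0 \<le> (T *\<^sub>v x) $ i0" using cpos by simp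
  thus ?thesis using i0 by auto
qed

lemma rho_mem:
  assumes T: "T \<in> carrier_mat n n" and n: "n > 0"
  shows "\<exists>lam. eigenvalue (map_mat complex_of_real T) lam \<and> rho T = norm lam"
proof -
  have "map_mat complex_of_real T \<in> carrier_mat n n" using T by auto
  from spectral_radius_mem_max(1)[OF this n] show ?thesis
    unfolding rho_def spectrum_def by auto
qed

lemma rho_nonneg:
  assumes T: "T \<in> carrier_mat n n" and n: "n > 0"
  shows "rho T \<ge> 0"
  using rho_mem[OF T n] by auto

lemma eig_le_rho:
  assumes T: "T \<in> carrier_mat n n" and ev: "eigenvalue (map_mat complex_of_real T) lam"
  shows "norm lam \<le> rho T"
proof -
  have Tc: "map_mat complex_of_real T \<in> carrier_mat n n" using T by auto
  have n: "n > 0" using eigenvalue_imp_nonzero_dim[OF Tc ev] .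
  show ?thesis unfolding rho_def using spectral_radius_mem_max(2)[OF Tc n] ev
    unfolding spectrum_def by auto
qed

lemma super_le:
  fixes T :: "real mat" and x :: "real vec"
  assumes T: "T \<in> carrier_mat n n" and n: "n > 0" and nn: "nonneg_mat T"
  and x: "x \<in> carrier_vec n" and pos: "\<forall>i<n. x$i > 0"
  and le: "\<forall>i<n. (T *\<^sub>v x)$i \<le> s * x$i"
  shows "rho T \<le> s"
proof -
  obtain lam where ev: "eigenvalue (map_mat complex_of_real T) lam" and r: "rho T = norm lam"
    using rho_mem[OF T n] by auto
  from eig_bound_gen[OF T nn x pos ev] obtain i where i: "i < n" "norm lam * x$i \<le> (T *\<^sub>v x) $ i" by auto
  with le have "norm lam * x$i \<le> s * x$i" by force
  moreover have "x$i > 0" using pos i by auto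
  ultimately show ?thesis unfolding r by (simp add: mult_le_cancel_right)
qed

lemma super_lt:
  fixes T :: "real mat" and x :: "real vec"
  assumes T: "T \<in> carrier_mat n n" and n: "n > 0" and nn: "nonneg_mat T"
  and x: "x \<in> carrier_vec n" and pos: "\<forall>i<n. x$i > 0"
  and le: "\<forall>i<n. (T *\<^sub>v x)$i < s * x$i"
  shows "rho T < s"
proof -
  obtain lam where ev: "eigenvalue (map_mat complex_of_real T) lam" and r: "rho T = norm lam"
    using rho_mem[OF T n] by auto
  from eig_bound_gen[OF T nn x pos ev] obtain i where i: "i < n" "norm lam * x$i \<le> (T *\<^sub>v x) $ i" by auto
  with le have "norm lam * x$i < s * x$i" by force
  moreover have "x$i > 0" using pos i by auto
  ultimately show ?thesis unfolding r by (simp add: mult_less_cancel_right)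
qed


lemma mult_mat_sum:
  assumes "A \<in> carrier_mat n m" "B \<in> carrier_mat m p" "i < n" "j < p"
  shows "(A * B) $$ (i,j) = (\<Sum>l<m. A $$ (i,l) * B $$ (l,j))"
  using assms by (auto simp: scalar_prod_def lessThan_atLeast0 intro!: sum.cong)

lemma nonneg_mult:
  assumes "A \<in> carrier_mat n m" "B \<in> carrier_mat m p" "nonneg_mat A" "nonneg_mat B"
  shows "nonneg_mat (A * B)"
  unfolding nonneg_mat_def
proof (intro allI impI)
  fix i j assume "i < dim_row (A*B)" "j < dim_col (A*B)"
  hence ij: "i < n" "j < p" using assms by auto
  show "(A*B) $$ (i,j) \<ge> 0" unfolding mult_mat_sum[OF assms(1,2) ij]
    using assms ij unfolding nonneg_mat_def by (auto intro!: sum_nonneg)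
qed

lemma nonneg_pow:
  assumes "A \<in> carrier_mat n n" "nonneg_mat A"
  shows "nonneg_mat (A ^\<^sub>m K)"
proof (induction K)
  case 0 thus ?case unfolding nonneg_mat_def by auto
next
  case (Suc K)
  thus ?case using nonneg_mult[OF pow_carrier_mat[OF assms(1)] assms(1) Suc assms(2)] by simp
qed

lemma map_pow_real:
  assumes "A \<in> carrier_mat n n"
  shows "map_mat complex_of_real (A ^\<^sub>m K) = (map_mat complex_of_real A) ^\<^sub>m K"
proof (induction K)
  case 0 thus ?case using assms by (auto intro!: eq_matI)
next
  case (Suc K)
  have "map_mat complex_of_real (A ^\<^sub>m Suc K) = map_mat complex_of_real (A ^\<^sub>m K * A)" by simp
  also have "\<dots> = map_mat complex_of_real (A ^\<^sub>m K) * map_mat complex_of_real A"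
    by (rule of_real_hom.mat_hom_mult[OF pow_carrier_mat[OF assms] assms])
  finally show ?case using Suc by simp
qed

lemma smult_pow:
  fixes A :: "real mat"
  assumes "A \<in> carrier_mat n n"
  shows "(a \<cdot>\<^sub>m A) ^\<^sub>m K = (a ^ K) \<cdot>\<^sub>m (A ^\<^sub>m K)"
proof (induction K)
  case 0 thus ?case using assms by (auto intro!: eq_matI)
next
  case (Suc K)
  have "(a \<cdot>\<^sub>m A) ^\<^sub>m Suc K = ((a ^ K) \<cdot>\<^sub>m (A ^\<^sub>m K)) * (a \<cdot>\<^sub>m A)" using Suc by simp
  also have "\<dots> = (a ^ K) \<cdot>\<^sub>m ((A ^\<^sub>m K) * (a \<cdot>\<^sub>m A))"
    using mult_smult_assoc_mat[where A="A ^\<^sub>m K" and B="a \<cdot>\<^sub>m A" and k="a^K" and nr=n and n=n and nc=n] assms by simp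
  also have "(A ^\<^sub>m K) * (a \<cdot>\<^sub>m A) = a \<cdot>\<^sub>m ((A ^\<^sub>m K) * A)"
    using mult_smult_distrib[where A="A ^\<^sub>m K" and B="A" and k="a" and nr=n and n=n and nc=n] assms by simp
  finally show ?case by (auto intro!: eq_matI)
qed

lemma power_bound:
  fixes B :: "real mat"
  assumes B: "B \<in> carrier_mat n n" and n: "n > 0" and t': "t' > rho B"
  shows "\<exists>c\<ge>0. \<forall>K i j. i < n \<longrightarrow> j < n \<longrightarrow> \<bar>(B ^\<^sub>m K) $$ (i,j)\<bar> \<le> c * t' ^ K"
proof -
  have t'pos: "t' > 0" using rho_nonneg[OF B n] t' by linarith
  define Br where "Br = (1 / t') \<cdot>\<^sub>m B"
  have Br: "Br \<in> carrier_mat n n" unfolding Br_def using B by auto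
  let ?Bc = "map_mat complex_of_real Br"
  have Bc: "?Bc \<in> carrier_mat n n" using Br by auto
  have sr: "spectral_radius ?Bc < 1"
  proof -
    from spectral_radius_mem_max(1)[OF Bc n] obtain mu where
      mu: "mu \<in> spectrum ?Bc" "spectral_radius ?Bc = norm mu" by auto
    from mu(1) obtain v where v: "v \<in> carrier_vec n" "v \<noteq> 0\<^sub>v n" "?Bc *\<^sub>v v = mu \<cdot>\<^sub>v v"
      unfolding spectrum_def eigenvalue_def eigenvector_def using Bc by auto
    have "map_mat complex_of_real B *\<^sub>v v = (of_real t' * mu) \<cdot>\<^sub>v v"
    proof (rule eq_vecI)
      fix i assume "i < dim_vec ((of_real t' * mu) \<cdot>\<^sub>v v)"
      hence i: "i < n" using v by auto
      have "(?Bc *\<^sub>v v) $ i = mu * v $ i" using v i by simp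
      hence "(\<Sum>j<n. complex_of_real (Br $$ (i,j)) * v $ j) = mu * v $ i"
        using mult_mat_vec_sum[OF Bc v(1) i] Br i by simp
      hence "(\<Sum>j<n. complex_of_real (B $$ (i,j)) * v $ j) = of_real t' * (mu * v $ i)"
        using i B t'pos unfolding Br_def
        by (simp add: sum_divide_distrib[symmetric] field_simps)
      thus "(map_mat complex_of_real B *\<^sub>v v) $ i = ((of_real t' * mu) \<cdot>\<^sub>v v) $ i"
        using mult_mat_vec_sum[of "map_mat complex_of_real B" n n v i] B v i by auto
    qed (use v B in auto)
    hence "eigenvalue (map_mat complex_of_real B) (of_real t' * mu)"
      unfolding eigenvalue_def eigenvector_def using v B by auto
    from eig_le_rho[OF B this] have "t' * norm mu \<le> rho B" using t'pos by (simp add: norm_mult)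
    with t' t'pos have "norm mu < 1"
      by (smt (verit, best) mult_le_cancel_left1)
    with mu show ?thesis by simp
  qed
  from spectral_radius_jnf_norm_bound_less_1_upper_triangular[OF Bc sr]
  obtain c where c: "\<And>K. norm_bound (?Bc ^\<^sub>m K) c" by auto
  from c[of 0] have nb: "\<forall>i j. i < dim_row (?Bc ^\<^sub>m 0) \<longrightarrow> j < dim_col (?Bc ^\<^sub>m 0) \<longrightarrow> norm ((?Bc ^\<^sub>m 0) $$ (i,j)) \<le> c"
    by (simp only: norm_bound_def)
  have d: "dim_row (?Bc ^\<^sub>m 0) = n" "dim_col (?Bc ^\<^sub>m 0) = n" using Bc by auto
  have "norm ((?Bc ^\<^sub>m 0) $$ (0,0)) \<le> c" using nb[rule_format, of 0 0] by (simp only: d n)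
  then have c0: "c \<ge> 0" by (meson norm_ge_zero order_trans)
  show ?thesis
  proof (intro exI[of _ c] conjI allI impI c0)
    fix K i j assume ij: "i < n" "j < n"
    have "?Bc ^\<^sub>m K = map_mat complex_of_real (Br ^\<^sub>m K)" using map_pow_real[OF Br] by simp
    hence e: "(?Bc ^\<^sub>m K) $$ (i,j) = complex_of_real ((Br ^\<^sub>m K) $$ (i,j))"
      using ij pow_carrier_mat[OF Br, of K] by (metis carrier_matD index_map_mat)
    have "norm ((?Bc ^\<^sub>m K) $$ (i,j)) \<le> c" using c[of K] ij Bc unfolding norm_bound_def by simp
    hence "norm (complex_of_real ((Br ^\<^sub>m K) $$ (i,j))) \<le> c" unfolding e .
    hence b: "\<bar>(Br ^\<^sub>m K) $$ (i,j)\<bar> \<le> c" by simp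
    have "Br ^\<^sub>m K = ((1/t') ^ K) \<cdot>\<^sub>m (B ^\<^sub>m K)" unfolding Br_def by (rule smult_pow[OF B])
    hence "(Br ^\<^sub>m K) $$ (i,j) = (1/t')^K * (B ^\<^sub>m K) $$ (i,j)" using ij B by simp
    with b have "\<bar>(B ^\<^sub>m K) $$ (i,j)\<bar> / t'^K \<le> c" using t'pos by (simp add: abs_mult power_divide)
    thus "\<bar>(B ^\<^sub>m K) $$ (i,j)\<bar> \<le> c * t' ^ K" using t'pos by (simp add: field_simps)
  qed
qed


lemma neumann:
  fixes B :: "real mat"
  assumes B: "B \<in> carrier_mat n n" and n: "n > 0" and nn: "nonneg_mat B" and t: "t > rho B"
  shows "\<exists>C \<in> carrier_mat n n. (t \<cdot>\<^sub>m 1\<^sub>m n - B) * C = 1\<^sub>m n \<and> C * (t \<cdot>\<^sub>m 1\<^sub>m n - B) = 1\<^sub>m n \<and> nonneg_mat C"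
proof -
  define X where "X = t \<cdot>\<^sub>m 1\<^sub>m n - B"
  have X: "X \<in> carrier_mat n n" unfolding X_def using B by auto
  have tpos: "t > 0" using rho_nonneg[OF B n] t by linarith
  have detX: "det X \<noteq> 0"
  proof
    assume d0: "det X = 0"
    have "char_matrix B t = (-1) \<cdot>\<^sub>m X" unfolding char_matrix_def X_def using B
      by (intro eq_matI) auto
    hence "det (char_matrix B t) = 0" using d0 by simp
    hence "eigenvalue B t" using eigenvalue_det[OF B] by simp
    then obtain v where v: "v \<in> carrier_vec n" "v \<noteq> 0\<^sub>v n" "B *\<^sub>v v = t \<cdot>\<^sub>v v"
      unfolding eigenvalue_def eigenvector_def using B by auto
    let ?w = "map_vec complex_of_real v"
    have w: "?w \<in> carrier_vec n" using v by auto
    have "?w \<noteq> 0\<^sub>v n"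
    proof
      assume "?w = 0\<^sub>v n"
      hence "v = 0\<^sub>v n" using v(1) by (intro eq_vecI) (auto dest!: arg_cong[of _ _ "\<lambda>x. x $ _"])
      with v(2) show False by simp
    qed
    moreover have "map_mat complex_of_real B *\<^sub>v ?w = complex_of_real t \<cdot>\<^sub>v ?w"
    proof -
      have "map_mat complex_of_real B *\<^sub>v ?w = map_vec complex_of_real (B *\<^sub>v v)"
        using of_real_hom.mult_mat_vec_hom[OF B v(1)] by (rule sym)
      also have "\<dots> = map_vec complex_of_real (t \<cdot>\<^sub>v v)" using v(3) by simp
      also have "\<dots> = complex_of_real t \<cdot>\<^sub>v ?w" by (intro eq_vecI) auto
      finally show ?thesis .
    qed
    moreover have "dim_row (map_mat complex_of_real B) = n" using B by simp
    ultimately have "eigenvalue (map_mat complex_of_real B) (complex_of_real t)"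
      unfolding eigenvalue_def eigenvector_def using w by metis
    from eig_le_rho[OF B this] t tpos show False by simp
  qed
  from det_non_zero_imp_unit[OF X detX, of undefined]
  obtain C where C: "C \<in> carrier_mat n n" "C * X = 1\<^sub>m n" "X * C = 1\<^sub>m n"
    unfolding Units_def by (auto simp: ring_mat_simps)
  have XC: "X * C = t \<cdot>\<^sub>m C - B * C" unfolding X_def
    using minus_mult_distrib_mat[of "t \<cdot>\<^sub>m 1\<^sub>m n" n n B C n] B C
    by (simp add: mult_smult_assoc_mat[of "1\<^sub>m n" n n C n])
  define P where "P K = ((1/t) \<cdot>\<^sub>m B) ^\<^sub>m K" for K
  have Bt: "(1/t) \<cdot>\<^sub>m B \<in> carrier_mat n n" using B by simp
  have P: "P K \<in> carrier_mat n n" for K unfolding P_def using Bt by simp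
  have Pnn: "nonneg_mat (P K)" for K unfolding P_def
    by (rule nonneg_pow[OF Bt]) (use nn tpos in \<open>auto simp: nonneg_mat_def\<close>)
  have Ceq: "C = (1/t) \<cdot>\<^sub>m 1\<^sub>m n + ((1/t) \<cdot>\<^sub>m B) * C"
  proof (rule eq_matI)
    fix i j assume ij: "i < dim_row ((1/t) \<cdot>\<^sub>m 1\<^sub>m n + ((1/t) \<cdot>\<^sub>m B) * C)"
      "j < dim_col ((1/t) \<cdot>\<^sub>m 1\<^sub>m n + ((1/t) \<cdot>\<^sub>m B) * C)"
    hence ij: "i < n" "j < n" using C B by auto
    have "(t \<cdot>\<^sub>m C - B * C) $$ (i,j) = (1\<^sub>m n :: real mat) $$ (i,j)" using XC C(3) by simp
    hence "t * C $$ (i,j) - (B * C) $$ (i,j) = (1\<^sub>m n :: real mat) $$ (i,j)" using ij B C by simp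
    moreover have "(((1/t) \<cdot>\<^sub>m B) * C) $$ (i,j) = (1/t) * (B * C) $$ (i,j)"
      using ij B C by (simp add: mult_smult_assoc_mat)
    ultimately show "C $$ (i,j) = ((1/t) \<cdot>\<^sub>m 1\<^sub>m n + ((1/t) \<cdot>\<^sub>m B) * C) $$ (i,j)"
      using ij B C tpos by (simp add: field_simps)
  qed (use B C in auto)
  have decomp: "\<exists>S \<in> carrier_mat n n. nonneg_mat S \<and> C = S + P K * C" for K
  proof (induction K)
    case 0
    have dB: "dim_row B = n" using B by auto
    have "C = 0\<^sub>m n n + P 0 * C" using C by (simp add: P_def dB)
    thus ?case by (intro bexI[of _ "0\<^sub>m n n"]) (auto simp: nonneg_mat_def)
  next
    case (Suc K)
    then obtain S where S: "S \<in> carrier_mat n n" "nonneg_mat S" "C = S + P K * C" by auto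
    have "P K * C = P K * ((1/t) \<cdot>\<^sub>m 1\<^sub>m n) + P K * (((1/t) \<cdot>\<^sub>m B) * C)"
      using Ceq mult_add_distrib_mat[OF P[of K], of "(1/t) \<cdot>\<^sub>m 1\<^sub>m n" n "((1/t) \<cdot>\<^sub>m B) * C"] B C
      by (metis one_carrier_mat smult_carrier_mat mult_carrier_mat)
    also have "P K * ((1/t) \<cdot>\<^sub>m 1\<^sub>m n) = (1/t) \<cdot>\<^sub>m P K"
      using mult_smult_distrib[OF P[of K] one_carrier_mat[of n]] P[of K] by simp
    also have "P K * (((1/t) \<cdot>\<^sub>m B) * C) = P (Suc K) * C"
      unfolding P_def using assoc_mult_mat[OF P[of K, unfolded P_def] Bt C(1)] by simp
    finally have "C = S + ((1/t) \<cdot>\<^sub>m P K + P (Suc K) * C)" using S(3) by simp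
    also have "\<dots> = (S + (1/t) \<cdot>\<^sub>m P K) + P (Suc K) * C"
      using S(1) P[of K] P[of "Suc K"] C by (simp add: assoc_add_mat)
    finally have eq: "C = (S + (1/t) \<cdot>\<^sub>m P K) + P (Suc K) * C" .
    have "nonneg_mat (S + (1/t) \<cdot>\<^sub>m P K)" using S Pnn[of K] P[of K] tpos
      unfolding nonneg_mat_def by auto
    thus ?case using eq S(1) P[of K] by (intro bexI[of _ "S + (1/t) \<cdot>\<^sub>m P K"]) auto
  qed
  define t' where "t' = (rho B + t) / 2"
  have t': "t' > rho B" "t' < t" "t' > 0" using t rho_nonneg[OF B n] unfolding t'_def by auto
  from power_bound[OF B n t'(1)] obtain c where c0: "c \<ge> 0"
    and c: "\<And>K i j. i < n \<Longrightarrow> j < n \<Longrightarrow> \<bar>(B ^\<^sub>m K) $$ (i,j)\<bar> \<le> c * t' ^ K" by auto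
  define q where "q = t' / t"
  have q: "0 < q" "q < 1" using t' tpos unfolding q_def by auto
  have Pb: "\<bar>P K $$ (i,l)\<bar> \<le> c * q ^ K" if "i < n" "l < n" for K i l
  proof -
    have "P K = (1/t)^K \<cdot>\<^sub>m (B ^\<^sub>m K)" unfolding P_def by (rule smult_pow[OF B])
    hence "P K $$ (i,l) = (1/t)^K * (B ^\<^sub>m K) $$ (i,l)" using that B by simp
    hence "\<bar>P K $$ (i,l)\<bar> = \<bar>(B ^\<^sub>m K) $$ (i,l)\<bar> / t^K" using tpos by (simp add: abs_mult power_divide)
    also have "\<dots> \<le> c * t' ^ K / t^K" using c[OF that] tpos by (simp add: divide_right_mono)
    also have "\<dots> = c * q ^ K" unfolding q_def by (simp add: power_divide)
    finally show ?thesis .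
  qed
  have "nonneg_mat C" unfolding nonneg_mat_def
  proof (intro allI impI)
    fix i j assume "i < dim_row C" "j < dim_col C"
    hence ij: "i < n" "j < n" using C by auto
    define D where "D = c * (\<Sum>l<n. \<bar>C $$ (l,j)\<bar>)"
    have D0: "D \<ge> 0" unfolding D_def using c0 by (auto intro!: sum_nonneg)
    have low: "C $$ (i,j) \<ge> - D * q ^ K" for K
    proof -
      obtain S where S: "S \<in> carrier_mat n n" "nonneg_mat S" "C = S + P K * C" using decomp by blast
      have "C $$ (i,j) = S $$ (i,j) + (P K * C) $$ (i,j)"
        using S(3) ij S(1) P[of K] C by (metis carrier_matD index_add_mat(1) mult_carrier_mat)
      also have "(P K * C) $$ (i,j) = (\<Sum>l<n. P K $$ (i,l) * C $$ (l,j))"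
        by (rule mult_mat_sum[OF P C(1) ij])
      finally have eq: "C $$ (i,j) = S $$ (i,j) + (\<Sum>l<n. P K $$ (i,l) * C $$ (l,j))" .
      have "- (\<Sum>l<n. P K $$ (i,l) * C $$ (l,j)) \<le> \<bar>\<Sum>l<n. P K $$ (i,l) * C $$ (l,j)\<bar>" by simp
      also have "\<dots> \<le> (\<Sum>l<n. \<bar>P K $$ (i,l)\<bar> * \<bar>C $$ (l,j)\<bar>)"
        by (rule order_trans[OF sum_abs]) (simp add: abs_mult)
      also have "\<dots> \<le> (\<Sum>l<n. (c * q ^ K) * \<bar>C $$ (l,j)\<bar>)"
        by (rule sum_mono) (use Pb ij in \<open>auto intro: mult_right_mono\<close>)
      also have "\<dots> = D * q ^ K" unfolding D_def by (simp add: sum_distrib_left algebra_simps)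
      finally have "(\<Sum>l<n. P K $$ (i,l) * C $$ (l,j)) \<ge> - (D * q ^ K)" by simp
      moreover have "S $$ (i,j) \<ge> 0" using S(1,2) ij unfolding nonneg_mat_def by auto
      ultimately show ?thesis using eq by linarith
    qed
    show "C $$ (i,j) \<ge> 0"
    proof (rule ccontr)
      assume neg: "\<not> C $$ (i,j) \<ge> 0"
      have "0 < - C $$ (i,j) / (D + 1)" using neg D0 by (intro divide_pos_pos) auto
      from real_arch_pow_inv[OF this q(2)] obtain K where K: "q ^ K < - C $$ (i,j) / (D + 1)" by auto
      hence "(D + 1) * q ^ K < - C $$ (i,j)" using D0 by (simp add: field_simps)
      moreover have "D * q ^ K \<le> (D + 1) * q ^ K" using q by (simp add: mult_right_mono)
      ultimately show False using low[of K] by linarith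
    qed
  qed
  thus ?thesis using C unfolding X_def by auto
qed


lemma minv_facts:
  assumes A: "A \<in> carrier_mat n n" and inv: "invertible_mat A"
  shows "minv A \<in> carrier_mat n n" "A * minv A = 1\<^sub>m n" "minv A * A = 1\<^sub>m n"
proof -
  from inv obtain B where AB: "A * B = 1\<^sub>m (dim_row A)" "B * A = 1\<^sub>m (dim_row B)"
    unfolding invertible_mat_def inverts_mat_def by auto
  have "dim_col B = n" using AB(1) A by (metis carrier_matD(1) index_mult_mat(3) index_one_mat(3))
  moreover have "dim_row B = n" using AB(2) A by (metis carrier_matD(2) index_mult_mat(3) index_one_mat(3))
  ultimately have B: "B \<in> carrier_mat n n" by auto
  have U: "A \<in> Units (ring_mat TYPE(real) n undefined)"
    unfolding Units_def using A B AB by (auto simp: ring_mat_simps)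
  have "mat_inverse A \<noteq> None"
  proof
    assume "mat_inverse A = None"
    from mat_inverse(1)[OF A this, of undefined] U show False by blast
  qed
  then obtain C where "mat_inverse A = Some C" by auto
  from mat_inverse(2)[OF A this] this show
    "minv A \<in> carrier_mat n n" "A * minv A = 1\<^sub>m n" "minv A * A = 1\<^sub>m n"
    unfolding minv_def by auto
qed

lemma le_sum_abs:
  fixes C :: "real mat"
  assumes "a < n" "b < n"
  shows "\<bar>C $$ (a,b)\<bar> \<le> (\<Sum>a'<n. \<Sum>b'<n. \<bar>C $$ (a',b')\<bar>)"
proof -
  have "\<bar>C $$ (a,b)\<bar> \<le> (\<Sum>b'<n. \<bar>C $$ (a,b')\<bar>)"
    using assms by (intro member_le_sum) auto
  also have "\<dots> \<le> (\<Sum>a'<n. \<Sum>b'<n. \<bar>C $$ (a',b')\<bar>)"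
    using assms by (intro member_le_sum[of a _ "\<lambda>a'. \<Sum>b'<n. \<bar>C $$ (a',b')\<bar>"]) (auto intro: sum_nonneg)
  finally show ?thesis .
qed

lemma inv_M_nonneg:
  assumes inv: "inv_M_matrix n A"
  shows "minv A \<in> carrier_mat n n" "A * minv A = 1\<^sub>m n" "minv A * A = 1\<^sub>m n" "nonneg_mat (minv A)"
proof -
  from inv obtain s B where A: "A \<in> carrier_mat n n" and inv: "invertible_mat A"
    and B: "B \<in> carrier_mat n n" "nonneg_mat B" "s \<ge> rho B" "A = s \<cdot>\<^sub>m 1\<^sub>m n - B"
    unfolding inv_M_matrix_def M_matrix_def by auto
  note mf = minv_facts[OF A inv]
  show "minv A \<in> carrier_mat n n" "A * minv A = 1\<^sub>m n" "minv A * A = 1\<^sub>m n" using mf by auto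
  define C where "C = minv A"
  have C: "C \<in> carrier_mat n n" "A * C = 1\<^sub>m n" using mf unfolding C_def by auto
  show "nonneg_mat (minv A)"
  proof (cases "n = 0")
    case True thus ?thesis using mf unfolding nonneg_mat_def by auto
  next
    case False
    hence n: "n > 0" by auto
    define M0 where "M0 = (\<Sum>a'<n. \<Sum>b'<n. \<bar>C $$ (a',b')\<bar>)"
    have M0: "\<bar>C $$ (a,b)\<bar> \<le> M0" if "a < n" "b < n" for a b
      unfolding M0_def by (rule le_sum_abs[OF that])
    have M00: "M0 \<ge> 0" unfolding M0_def by (auto intro!: sum_nonneg)
    have key: "\<exists>R \<in> carrier_mat n n. nonneg_mat R \<and> (\<forall>i<n. \<forall>j<n. C $$ (i,j) = R $$ (i,j) + eps * (R * C) $$ (i,j))"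
      if eps: "eps > 0" for eps
    proof -
      have "s + eps > rho B" using B eps by auto
      from neumann[OF B(1) n B(2) this] obtain R where R: "R \<in> carrier_mat n n"
        "R * ((s + eps) \<cdot>\<^sub>m 1\<^sub>m n - B) = 1\<^sub>m n" "nonneg_mat R" by auto
      have e1: "(s + eps) \<cdot>\<^sub>m 1\<^sub>m n - B = A + eps \<cdot>\<^sub>m 1\<^sub>m n"
        unfolding B(4) using B(1) by (intro eq_matI) (auto simp: algebra_simps)
      have "R * (A + eps \<cdot>\<^sub>m 1\<^sub>m n) = R * A + R * (eps \<cdot>\<^sub>m 1\<^sub>m n)"
        using mult_add_distrib_mat[OF R(1) A, of "eps \<cdot>\<^sub>m 1\<^sub>m n"] by simp
      also have "R * (eps \<cdot>\<^sub>m 1\<^sub>m n) = eps \<cdot>\<^sub>m R"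
        using mult_smult_distrib[OF R(1) one_carrier_mat[of n]] R(1) by simp
      finally have e2: "R * A + eps \<cdot>\<^sub>m R = 1\<^sub>m n" using R(2) e1 by simp
      have "R = R * (A * C)" using C R by simp
      also have "\<dots> = (R * A) * C" using R(1) A C(1) by (simp add: assoc_mult_mat)
      finally have e3: "R = (R * A) * C" .
      have RA: "R * A \<in> carrier_mat n n" using R A by auto
      show ?thesis
      proof (intro bexI[of _ R] conjI allI impI R)
        fix i j assume ij: "i < n" "j < n"
        have "R $$ (i,j) = ((R * A) * C) $$ (i,j)" using e3 by simp
        also have "\<dots> = (\<Sum>l<n. (R * A) $$ (i,l) * C $$ (l,j))" by (rule mult_mat_sum[OF RA C(1) ij])
        also have "\<dots> = (\<Sum>l<n. ((1\<^sub>m n :: real mat) $$ (i,l) - eps * R $$ (i,l)) * C $$ (l,j))"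
        proof (rule sum.cong)
          fix l assume "l \<in> {..<n}"
          hence l: "l < n" by auto
          have "(R * A + eps \<cdot>\<^sub>m R) $$ (i,l) = (1\<^sub>m n :: real mat) $$ (i,l)" using e2 by simp
          hence "(R * A) $$ (i,l) + eps * R $$ (i,l) = (1\<^sub>m n :: real mat) $$ (i,l)"
            using RA R(1) ij l by simp
          hence "(R * A) $$ (i,l) = (1\<^sub>m n :: real mat) $$ (i,l) - eps * R $$ (i,l)" by linarith
          thus "(R * A) $$ (i,l) * C $$ (l,j) = ((1\<^sub>m n :: real mat) $$ (i,l) - eps * R $$ (i,l)) * C $$ (l,j)"
            by simp
        qed simp
        also have "\<dots> = (\<Sum>l<n. (1\<^sub>m n :: real mat) $$ (i,l) * C $$ (l,j)) - eps * (\<Sum>l<n. R $$ (i,l) * C $$ (l,j))"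
          by (simp add: algebra_simps sum_subtractf sum_distrib_left)
        also have "(\<Sum>l<n. (1\<^sub>m n :: real mat) $$ (i,l) * C $$ (l,j)) = (\<Sum>l<n. if i = l then C $$ (l,j) else 0)"
          by (intro sum.cong) (use ij in auto)
        also have "\<dots> = C $$ (i,j)" using ij by simp
        also have "(\<Sum>l<n. R $$ (i,l) * C $$ (l,j)) = (R * C) $$ (i,j)"
          by (rule mult_mat_sum[OF R(1) C(1) ij, symmetric])
        finally show "C $$ (i,j) = R $$ (i,j) + eps * (R * C) $$ (i,j)" by simp
      qed
    qed
    show ?thesis unfolding nonneg_mat_def C_def[symmetric]
    proof (intro allI impI)
      fix i j assume "i < dim_row C" "j < dim_col C"
      hence ij: "i < n" "j < n" using C by auto
      show "C $$ (i,j) \<ge> 0"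
      proof (rule ccontr)
        assume neg: "\<not> C $$ (i,j) \<ge> 0"
        define K where "K = 2 * real n * M0^2 + 1"
        have "2 * real n * M0^2 \<ge> 0" by simp
        hence Kpos: "K > 0" unfolding K_def by linarith
        define eps where "eps = min (1 / (2 * real n * M0 + 1)) (- C $$ (i,j) / (2 * K))"
        have "2 * real n * M0 \<ge> 0" using M00 by simp
        hence den: "2 * real n * M0 + 1 > 0" by linarith
        have "- C $$ (i,j) / (2 * K) > 0" using neg Kpos by (intro divide_pos_pos) auto
        hence eps: "eps > 0" unfolding eps_def using den by auto
        have eps1: "eps * (real n * M0) \<le> 1/2"
        proof -
          have "eps \<le> 1 / (2 * real n * M0 + 1)" unfolding eps_def by simp
          hence "eps * (2 * real n * M0 + 1) \<le> 1" using den by (simp add: field_simps)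
          thus ?thesis using eps by (simp add: algebra_simps)
        qed
        have eps2: "eps * K \<le> - C $$ (i,j) / 2"
        proof -
          have "eps \<le> - C $$ (i,j) / (2 * K)" unfolding eps_def by simp
          thus ?thesis using Kpos by (simp add: field_simps)
        qed
        from key[OF eps] obtain R where R: "R \<in> carrier_mat n n" "nonneg_mat R"
          "\<And>i j. i < n \<Longrightarrow> j < n \<Longrightarrow> C $$ (i,j) = R $$ (i,j) + eps * (R * C) $$ (i,j)" by auto
        have Rnn: "R $$ (a,b) \<ge> 0" if "a < n" "b < n" for a b using R(1,2) that unfolding nonneg_mat_def by auto
        define rs where "rs = (\<Sum>l<n. R $$ (i,l))"
        have rs0: "rs \<ge> 0" unfolding rs_def using Rnn ij by (auto intro!: sum_nonneg)
        have RCb: "\<bar>(R * C) $$ (a,b)\<bar> \<le> M0 * (\<Sum>l<n. R $$ (a,l))" if "a < n" "b < n" for a b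
        proof -
          have "\<bar>(R * C) $$ (a,b)\<bar> = \<bar>\<Sum>l<n. R $$ (a,l) * C $$ (l,b)\<bar>"
            using mult_mat_sum[OF R(1) C(1) that] by simp
          also have "\<dots> \<le> (\<Sum>l<n. R $$ (a,l) * \<bar>C $$ (l,b)\<bar>)"
            by (rule order_trans[OF sum_abs]) (use Rnn that in \<open>auto simp: abs_mult\<close>)
          also have "\<dots> \<le> (\<Sum>l<n. R $$ (a,l) * M0)"
            by (rule sum_mono) (use Rnn that M0 in \<open>auto intro: mult_left_mono\<close>)
          finally show ?thesis by (simp add: sum_distrib_left mult.commute)
        qed
        have "rs \<le> (\<Sum>l<n. (M0 + eps * (M0 * rs)))"
          unfolding rs_def
        proof (rule sum_mono)
          fix l assume "l \<in> {..<n}"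
          hence l: "l < n" by auto
          have "R $$ (i,l) = C $$ (i,l) - eps * (R * C) $$ (i,l)" using R(3)[OF ij(1) l] by simp
          also have "\<dots> \<le> M0 + eps * \<bar>(R * C) $$ (i,l)\<bar>"
          proof -
            have "C $$ (i,l) \<le> M0" using M0[OF ij(1) l] by (rule abs_le_D1)
            moreover have "eps * (- (R * C) $$ (i,l)) \<le> eps * \<bar>(R * C) $$ (i,l)\<bar>"
              using eps by (intro mult_left_mono) auto
            ultimately show ?thesis by simp
          qed
          also have "\<dots> \<le> M0 + eps * (M0 * rs)"
            using RCb[OF ij(1) l] eps unfolding rs_def by (simp add: mult_left_mono)
          finally show "R $$ (i,l) \<le> M0 + eps * (M0 * (\<Sum>l<n. R $$ (i,l)))" unfolding rs_def .
        qed
        hence "rs \<le> real n * M0 + (eps * (real n * M0)) * rs" by (simp add: algebra_simps)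
        moreover have "(eps * (real n * M0)) * rs \<le> (1/2) * rs"
          using eps1 rs0 by (rule mult_right_mono)
        ultimately have "rs \<le> real n * M0 + rs / 2" by linarith
        hence rsb: "rs \<le> 2 * real n * M0" by simp
        have "C $$ (i,j) = R $$ (i,j) + eps * (R * C) $$ (i,j)" using R(3)[OF ij] .
        also have "\<dots> \<ge> 0 - eps * (M0 * rs)"
        proof -
          have "(R * C) $$ (i,j) \<ge> - (M0 * rs)" using RCb[OF ij] unfolding rs_def by linarith
          hence "eps * (R * C) $$ (i,j) \<ge> eps * (- (M0 * rs))" using eps
            by (intro mult_left_mono) auto
          hence "eps * (R * C) $$ (i,j) \<ge> - (eps * (M0 * rs))" by simp
          thus ?thesis using Rnn[OF ij] by linarith
        qed
        finally have c1: "C $$ (i,j) \<ge> - eps * (M0 * rs)" by simp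
        have "M0 * rs \<le> M0 * (2 * real n * M0)" using rsb M00 by (simp add: mult_left_mono)
        also have "\<dots> \<le> K" unfolding K_def by (simp add: power2_eq_square algebra_simps)
        finally have "eps * (M0 * rs) \<le> eps * K" using eps by (simp add: mult_left_mono)
        with c1 eps2 have "C $$ (i,j) \<ge> C $$ (i,j) / 2" by linarith
        with neg show False by linarith
      qed
    qed
  qed
qed


lemma nonneg_mv:
  fixes Y :: "real mat"
  assumes Y: "Y \<in> carrier_mat n m" and nn: "nonneg_mat Y" and v: "v \<in> carrier_vec m"
    and vnn: "\<forall>j<m. v $ j \<ge> 0" and i: "i < n"
  shows "(Y *\<^sub>v v) $ i \<ge> 0"
  unfolding mult_mat_vec_sum[OF Y v i] using nn Y vnn i unfolding nonneg_mat_def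
  by (auto intro!: sum_nonneg)

lemma smult_mat_vec:
  fixes A :: "real mat"
  assumes A: "A \<in> carrier_mat n m" and v: "v \<in> carrier_vec m"
  shows "(k \<cdot>\<^sub>m A) *\<^sub>v v = k \<cdot>\<^sub>v (A *\<^sub>v v)"
proof (rule eq_vecI)
  fix i assume "i < dim_vec (k \<cdot>\<^sub>v (A *\<^sub>v v))"
  hence i: "i < n" using A by simp
  have Ak: "k \<cdot>\<^sub>m A \<in> carrier_mat n m" using A by simp
  show "((k \<cdot>\<^sub>m A) *\<^sub>v v) $ i = (k \<cdot>\<^sub>v (A *\<^sub>v v)) $ i"
    using mult_mat_vec_sum[OF Ak v i] mult_mat_vec_sum[OF A v i] i A
    by (simp add: sum_distrib_left algebra_simps)
qed (use A in simp)

lemma pos_row: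
  fixes Y Z :: "real mat"
  assumes Y: "Y \<in> carrier_mat n n" and Z: "Z \<in> carrier_mat n n" and nn: "nonneg_mat Y"
    and YZ: "Y * Z = 1\<^sub>m n" and w: "w \<in> carrier_vec n" and wpos: "\<forall>j<n. w $ j > 0" and i: "i < n"
  shows "(Y *\<^sub>v w) $ i > 0"
proof -
  have Ynn: "Y $$ (i,l) \<ge> 0" if "l < n" for l using nn Y i that unfolding nonneg_mat_def by auto
  have "\<exists>l<n. Y $$ (i,l) \<noteq> 0"
  proof (rule ccontr)
    assume "\<not> ?thesis"
    hence "(Y * Z) $$ (i,i) = 0" using mult_mat_sum[OF Y Z i i] by simp
    with YZ i show False by simp
  qed
  then obtain l where l: "l < n" "Y $$ (i,l) \<noteq> 0" by auto
  have "0 < Y $$ (i,l) * w $ l" using l Ynn[OF l(1)] wpos by simp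
  also have "\<dots> \<le> (\<Sum>j<n. Y $$ (i,j) * w $ j)"
    using l Ynn wpos by (intro member_le_sum[of l _ "\<lambda>j. Y $$ (i,j) * w $ j"]) (auto intro: less_imp_le)
  also have "\<dots> = (Y *\<^sub>v w) $ i" using mult_mat_vec_sum[OF Y w i] by simp
  finally show ?thesis .
qed

theorem corollary3:
  fixes k l :: nat
    and A A11 A12 A21 A22 M11 N11 M22 N22 M21 N21 :: "real mat"
  assumes "inv_M_matrix (k + l) A"
    and "A11 \<in> carrier_mat k k" and "A12 \<in> carrier_mat k l"
    and "A21 \<in> carrier_mat l k" and "A22 \<in> carrier_mat l l"
    and "A = four_block_mat A11 A12 A21 A22"
    and "M11 \<in> carrier_mat k k" and "N11 \<in> carrier_mat k k"
    and "M22 \<in> carrier_mat l l" and "N22 \<in> carrier_mat l l"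
    and "M21 \<in> carrier_mat l k" and "N21 \<in> carrier_mat l k"
    and "regular_splitting (k + l) A
           (four_block_mat M11 (0\<^sub>m k l) M21 M22)
           (four_block_mat N11 (- A12) N21 N22)"
    and "regular_splitting (k + l) A
           (four_block_mat M11 A12 (0\<^sub>m l k) M22)
           (four_block_mat N11 (0\<^sub>m k l) (- A21) N22)"
  shows "rho (minv (four_block_mat M11 A12 (0\<^sub>m l k) M22) * four_block_mat N11 (0\<^sub>m k l) (- A21) N22)
         \<le> rho (minv (four_block_mat M11 (0\<^sub>m k l) M21 M22) * four_block_mat N11 (- A12) N21 N22)"
proof -
  define n where "n = k + l"
  define P' where "P' = four_block_mat M11 (0\<^sub>m k l) M21 M22"
  define Q' where "Q' = four_block_mat N11 (- A12) N21 N22"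
  define P where "P = four_block_mat M11 A12 (0\<^sub>m l k) M22"
  define Q where "Q = four_block_mat N11 (0\<^sub>m k l) (- A21) N22"
  note cars = assms(2-5,7-12)
  have P'c: "P' \<in> carrier_mat n n" unfolding P'_def n_def using cars by auto
  have Q'c: "Q' \<in> carrier_mat n n" unfolding Q'_def n_def using cars by auto
  have Pc: "P \<in> carrier_mat n n" unfolding P_def n_def using cars by auto
  have Qc: "Q \<in> carrier_mat n n" unfolding Q_def n_def using cars by auto
  have Ac: "A \<in> carrier_mat n n" using assms(1) unfolding n_def inv_M_matrix_def M_matrix_def by auto
  have rs1: "inv_M_matrix n P'" "nonneg_mat Q'" "A = P' - Q'"
    using assms(13) unfolding regular_splitting_def P'_def Q'_def n_def by auto
  have rs2: "inv_M_matrix n P" "nonneg_mat Q" "A = P - Q"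
    using assms(14) unfolding regular_splitting_def P_def Q_def n_def by auto
  note iP' = inv_M_nonneg[OF rs1(1)]
  note iP = inv_M_nonneg[OF rs2(1)]
  note iA = inv_M_nonneg[OF assms(1)[folded n_def]]
  define T' where "T' = minv P' * Q'"
  define T where "T = minv P * Q"
  have T'c: "T' \<in> carrier_mat n n" unfolding T'_def using iP'(1) Q'c by auto
  have Tc: "T \<in> carrier_mat n n" unfolding T_def using iP(1) Qc by auto
  have T'nn: "nonneg_mat T'" unfolding T'_def by (rule nonneg_mult[OF iP'(1) Q'c iP'(4) rs1(2)])
  have Tnn: "nonneg_mat T" unfolding T_def by (rule nonneg_mult[OF iP(1) Qc iP(4) rs2(2)])
  show ?thesis
  proof (cases "n = 0")
    case True
    have "T = T'" using Tc T'c True by (intro eq_matI) auto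
    thus ?thesis unfolding T_def T'_def P_def Q_def P'_def Q'_def by simp
  next
    case False
    hence n: "n > 0" by auto
    have entA: "A $$ (i,j) = P' $$ (i,j) - Q' $$ (i,j)" "A $$ (i,j) = P $$ (i,j) - Q $$ (i,j)"
      if "i < n" "j < n" for i j
    proof -
      have "(P' - Q') $$ (i,j) = P' $$ (i,j) - Q' $$ (i,j)" using that P'c Q'c by auto
      thus "A $$ (i,j) = P' $$ (i,j) - Q' $$ (i,j)" using rs1(3) by simp
      have "(P - Q) $$ (i,j) = P $$ (i,j) - Q $$ (i,j)" using that Pc Qc by auto
      thus "A $$ (i,j) = P $$ (i,j) - Q $$ (i,j)" using rs2(3) by simp
    qed
    have Z1: "P' $$ (i,j) = 0" "Q $$ (i,j) = 0" if "i < k" "k \<le> j" "j < n" for i j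
      using that cars unfolding P'_def Q_def n_def by auto
    have Z2: "P $$ (i,j) = 0" if "k \<le> i" "i < n" "j < k" for i j
      using that cars unfolding P_def n_def by auto
    have D: "P $$ (i,j) = P' $$ (i,j)" "Q $$ (i,j) = Q' $$ (i,j)"
      if "i < n" "j < n" "i < k \<longleftrightarrow> j < k" for i j
      using that cars unfolding P_def P'_def Q_def Q'_def n_def by auto
    have Q'nn: "Q' $$ (i,j) \<ge> 0" if "i < n" "j < n" for i j
      using rs1(2) Q'c that unfolding nonneg_mat_def by auto
    define e where "e = vec n (\<lambda>_. 1::real)"
    have ec: "e \<in> carrier_vec n" unfolding e_def by simp
    have Q'e: "Q' *\<^sub>v e \<in> carrier_vec n" using Q'c ec by simp
    have rhoT'1: "rho T' < 1"
    proof -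
      define y where "y = minv A *\<^sub>v (Q' *\<^sub>v e)"
      have yc: "y \<in> carrier_vec n" unfolding y_def using iA(1) Q'e by simp
      have ynn: "y $ i \<ge> 0" if "i < n" for i unfolding y_def
        by (rule nonneg_mv[OF iA(1) iA(4) Q'e _ that])
          (use nonneg_mv[OF Q'c rs1(2) ec] in \<open>auto simp: e_def\<close>)
      define x where "x = e + y"
      have xc: "x \<in> carrier_vec n" unfolding x_def using ec yc by simp
      have xi: "x $ i = 1 + y $ i" if "i < n" for i unfolding x_def e_def using that yc by simp
      have P'eq: "P' = A + Q'" using entA Ac Q'c P'c by (intro eq_matI) auto
      have Q'eq: "Q' = P' - A" using entA Ac Q'c P'c by (intro eq_matI) auto
      have "A *\<^sub>v x = A *\<^sub>v e + A *\<^sub>v y" unfolding x_def by (rule mult_add_distrib_mat_vec[OF Ac ec yc])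
      also have "A *\<^sub>v y = (A * minv A) *\<^sub>v (Q' *\<^sub>v e)" unfolding y_def
        using assoc_mult_mat_vec[OF Ac iA(1) Q'e] by simp
      also have "\<dots> = Q' *\<^sub>v e" using iA(2) Q'e by simp
      also have "A *\<^sub>v e + Q' *\<^sub>v e = (A + Q') *\<^sub>v e" by (rule add_mult_distrib_mat_vec[OF Ac Q'c ec, symmetric])
      finally have Ax: "A *\<^sub>v x = P' *\<^sub>v e" unfolding P'eq .
      have "T' *\<^sub>v x = minv P' *\<^sub>v (Q' *\<^sub>v x)" unfolding T'_def using iP'(1) Q'c xc by simp
      also have "Q' *\<^sub>v x = P' *\<^sub>v x - P' *\<^sub>v e" unfolding Q'eq
        using minus_mult_distrib_mat_vec[OF P'c Ac xc] Ax by simp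
      also have "\<dots> = P' *\<^sub>v (x - e)" by (rule mult_minus_distrib_mat_vec[OF P'c xc ec, symmetric])
      also have "minv P' *\<^sub>v (P' *\<^sub>v (x - e)) = (minv P' * P') *\<^sub>v (x - e)"
        using assoc_mult_mat_vec[OF iP'(1) P'c, of "x - e"] xc ec by simp
      also have "\<dots> = x - e" using iP'(3) xc ec by simp
      finally have Tx: "T' *\<^sub>v x = x - e" .
      show ?thesis
      proof (rule super_lt[OF T'c n T'nn xc])
        show "\<forall>i<n. 0 < x $ i" using xi ynn by (smt (verit))
        show "\<forall>i<n. (T' *\<^sub>v x) $ i < 1 * x $ i" using Tx xc ec unfolding e_def by simp
      qed
    qed
    have step2: "rho T \<le> mu" if mu: "rho T' < mu" "mu \<le> 1" for mu
    proof -
      have mupos: "mu > 0" using rho_nonneg[OF T'c n] mu by linarith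
      from neumann[OF T'c n T'nn mu(1)] obtain R where R: "R \<in> carrier_mat n n"
        "(mu \<cdot>\<^sub>m 1\<^sub>m n - T') * R = 1\<^sub>m n" "nonneg_mat R" by auto
      define X where "X = mu \<cdot>\<^sub>m 1\<^sub>m n - T'"
      have Xc: "X \<in> carrier_mat n n" unfolding X_def using T'c by (rule minus_carrier_mat)
      define u where "u = minv P' *\<^sub>v e"
      have uc: "u \<in> carrier_vec n" unfolding u_def using iP'(1) ec by simp
      have unn: "\<forall>j<n. u $ j \<ge> 0" unfolding u_def using nonneg_mv[OF iP'(1) iP'(4) ec] by (auto simp: e_def)
      define x where "x = R *\<^sub>v u"
      have xc: "x \<in> carrier_vec n" unfolding x_def using R(1) uc by simp
      have xnn: "x $ j \<ge> 0" if "j < n" for j unfolding x_def using nonneg_mv[OF R(1) R(3) uc unn that] .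
      have PX: "P' * X = mu \<cdot>\<^sub>m P' - Q'"
      proof -
        have "P' * X = P' * (mu \<cdot>\<^sub>m 1\<^sub>m n) - P' * T'" unfolding X_def
          by (rule mult_minus_distrib_mat[OF P'c _ T'c]) simp
        also have "P' * (mu \<cdot>\<^sub>m 1\<^sub>m n) = mu \<cdot>\<^sub>m P'"
          using mult_smult_distrib[OF P'c one_carrier_mat[of n]] P'c by simp
        also have "P' * T' = (P' * minv P') * Q'" unfolding T'_def
          using assoc_mult_mat[OF P'c iP'(1) Q'c] by simp
        also have "\<dots> = Q'" using iP'(2) Q'c by simp
        finally show ?thesis .
      qed
      have "(mu \<cdot>\<^sub>m P' - Q') *\<^sub>v x = P' *\<^sub>v (X *\<^sub>v x)" unfolding PX[symmetric]
        using assoc_mult_mat_vec[OF P'c Xc xc] .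
      also have "X *\<^sub>v x = (X * R) *\<^sub>v u" unfolding x_def using assoc_mult_mat_vec[OF Xc R(1) uc] by simp
      also have "\<dots> = u" using R(2) uc unfolding X_def by simp
      also have "P' *\<^sub>v u = (P' * minv P') *\<^sub>v e" unfolding u_def using assoc_mult_mat_vec[OF P'c iP'(1) ec] by simp
      also have "\<dots> = e" using iP'(2) ec by simp
      finally have Wx: "(mu \<cdot>\<^sub>m P' - Q') *\<^sub>v x = e" .
      have W'c: "mu \<cdot>\<^sub>m P' - Q' \<in> carrier_mat n n" using Q'c by (rule minus_carrier_mat)
      have ent1: "(\<Sum>j<n. (mu * P' $$ (i,j) - Q' $$ (i,j)) * x $ j) = 1" if i: "i < n" for i
      proof -
        have "((mu \<cdot>\<^sub>m P' - Q') *\<^sub>v x) $ i = 1" using Wx i unfolding e_def by simp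
        thus ?thesis unfolding mult_mat_vec_sum[OF W'c xc i] using i P'c Q'c
          by (metis (no_types, lifting) carrier_matD index_minus_mat(1) index_smult_mat(1) lessThan_iff sum.cong)
      qed
      define d where "d j = (if j < k then 1 else 1 / mu)" for j
      have dpos: "d j > 0" for j unfolding d_def using mupos by auto
      define z where "z = vec n (\<lambda>j. d j * x $ j)"
      have zc: "z \<in> carrier_vec n" unfolding z_def by simp
      have znn: "\<forall>j<n. z $ j \<ge> 0" unfolding z_def using dpos xnn by (simp add: less_imp_le)
      define W where "W = mu \<cdot>\<^sub>m P - Q"
      have Wc: "W \<in> carrier_mat n n" unfolding W_def using Qc by (rule minus_carrier_mat)
      define w where "w = W *\<^sub>v z"
      have wc: "w \<in> carrier_vec n" unfolding w_def using Wc zc by simp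
      have coef: "(mu * P $$ (i,j) - Q $$ (i,j)) * d j - d i * (mu * P' $$ (i,j) - Q' $$ (i,j)) \<ge> 0"
        if ij: "i < n" "j < n" for i j
      proof (cases "i < k \<longleftrightarrow> j < k")
        case True
        thus ?thesis using D[OF ij True] unfolding d_def by auto
      next
        case False
        show ?thesis
        proof (cases "i < k")
          case True
          with False have j: "k \<le> j" by auto
          have "P $$ (i,j) = - Q' $$ (i,j)" using entA[OF ij] Z1[OF True j ij(2)] by simp
          thus ?thesis using Z1[OF True j ij(2)] True j mupos unfolding d_def by simp
        next
          case ik: False
          with False have j: "j < k" and i: "k \<le> i" by auto
          have "- Q $$ (i,j) = P' $$ (i,j) - Q' $$ (i,j)" using entA[OF ij] Z2[OF i ij(1) j] by simp
          hence "(mu * P $$ (i,j) - Q $$ (i,j)) * d j - d i * (mu * P' $$ (i,j) - Q' $$ (i,j))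
              = Q' $$ (i,j) * (1 / mu - 1)"
            using Z2[OF i ij(1) j] j i mupos unfolding d_def by (simp add: field_simps)
          moreover have "1 / mu - 1 \<ge> 0" using mu mupos by (simp add: field_simps)
          ultimately show ?thesis using Q'nn[OF ij] by simp
        qed
      qed
      have wge: "w $ i \<ge> d i" if i: "i < n" for i
      proof -
        have "d i = d i * (\<Sum>j<n. (mu * P' $$ (i,j) - Q' $$ (i,j)) * x $ j)" using ent1[OF i] by simp
        also have "\<dots> = (\<Sum>j<n. d i * (mu * P' $$ (i,j) - Q' $$ (i,j)) * x $ j)"
          by (simp add: sum_distrib_left algebra_simps)
        also have "\<dots> \<le> (\<Sum>j<n. W $$ (i,j) * z $ j)"
        proof (rule sum_mono)
          fix j assume "j \<in> {..<n}"
          hence j: "j < n" by auto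
          have "0 \<le> ((mu * P $$ (i,j) - Q $$ (i,j)) * d j - d i * (mu * P' $$ (i,j) - Q' $$ (i,j))) * x $ j"
            using coef[OF i j] xnn[OF j] by simp
          moreover have "W $$ (i,j) * z $ j = (mu * P $$ (i,j) - Q $$ (i,j)) * (d j * x $ j)"
            unfolding W_def z_def using i j Pc Qc by simp
          ultimately show "d i * (mu * P' $$ (i,j) - Q' $$ (i,j)) * x $ j \<le> W $$ (i,j) * z $ j"
            by (simp add: algebra_simps)
        qed
        also have "\<dots> = w $ i" unfolding w_def using mult_mat_vec_sum[OF Wc zc i] by simp
        finally show ?thesis .
      qed
      have wpos: "\<forall>j<n. w $ j > 0" using wge dpos by (smt (verit))
      have "w = mu \<cdot>\<^sub>v (P *\<^sub>v z) - Q *\<^sub>v z" unfolding w_def W_def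
        using minus_mult_distrib_mat_vec[of "mu \<cdot>\<^sub>m P" n n Q z] Pc Qc zc smult_mat_vec[OF Pc zc] by simp
      hence "minv P *\<^sub>v w = minv P *\<^sub>v (mu \<cdot>\<^sub>v (P *\<^sub>v z)) - minv P *\<^sub>v (Q *\<^sub>v z)"
        using mult_minus_distrib_mat_vec[OF iP(1), of "mu \<cdot>\<^sub>v (P *\<^sub>v z)" "Q *\<^sub>v z"] Pc Qc zc by simp
      also have "minv P *\<^sub>v (mu \<cdot>\<^sub>v (P *\<^sub>v z)) = mu \<cdot>\<^sub>v ((minv P * P) *\<^sub>v z)"
        using mult_mat_vec[OF iP(1), of "P *\<^sub>v z" mu] assoc_mult_mat_vec[OF iP(1) Pc zc] Pc zc by simp
      also have "\<dots> = mu \<cdot>\<^sub>v z" using iP(3) zc by simp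
      also have "minv P *\<^sub>v (Q *\<^sub>v z) = T *\<^sub>v z" unfolding T_def using assoc_mult_mat_vec[OF iP(1) Qc zc] by simp
      finally have iPw: "minv P *\<^sub>v w = mu \<cdot>\<^sub>v z - T *\<^sub>v z" .
      have key: "(T *\<^sub>v z) $ i = mu * z $ i - (minv P *\<^sub>v w) $ i" if i: "i < n" for i
        using iPw i zc Tc by simp
      have pw: "(minv P *\<^sub>v w) $ i > 0" if i: "i < n" for i
        by (rule pos_row[OF iP(1) Pc iP(4) iP(3) wc wpos i])
      have Tz0: "(T *\<^sub>v z) $ i \<ge> 0" if i: "i < n" for i by (rule nonneg_mv[OF Tc Tnn zc znn i])
      show ?thesis
      proof (rule super_le[OF Tc n Tnn zc])
        show "\<forall>i<n. 0 < z $ i"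
        proof (intro allI impI)
          fix i assume i: "i < n"
          have "mu * z $ i > 0" using key[OF i] pw[OF i] Tz0[OF i] by linarith
          thus "0 < z $ i" using mupos by (simp add: zero_less_mult_iff)
        qed
        show "\<forall>i<n. (T *\<^sub>v z) $ i \<le> mu * z $ i" using key pw by (smt (verit))
      qed
    qed
    show ?thesis
    proof (rule ccontr)
      assume "\<not> ?thesis"
      hence gt: "rho T > rho T'" unfolding T_def T'_def P_def Q_def P'_def Q'_def by simp
      define mu where "mu = (rho T' + min (rho T) 1) / 2"
      have "rho T' < mu" "mu \<le> 1" "mu < rho T" using gt rhoT'1 unfolding mu_def by auto
      with step2 show False by force
    qed
  qed
qed

end
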